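(* Let $m\ge4$ be even and let $f:\mathrm{GF}(2^m)\to\mathrm{GF}(2)$ be a bent function with $f(0)=0$; put $n_f=|D_f|$ (so $n_f=2^{m-1}\pm2^{(m-2)/2}$). Then $\mathcal{C}_{D_f}$ is a two-weight binary code with parameters $[n_f,\ m,\ (n_f-2^{(m-2)/2})/2]$, whose nonzero weights are $\frac{n_f}{2}-2^{(m-4)/2}$ with multiplicity $\frac{2^m-1-n_f2^{-(m-2)/2}}{2}$ and $\frac{n_f}{2}+2^{(m-4)/2}$ with multiplicity $\frac{2^m-1+n_f2^{-(m-2)/2}}{2}$.
   Context: $\mathrm{Tr}$ denotes the absolute trace from $\mathrm{GF}(2^m)$ onto $\mathrm{GF}(2)$. For a subset $D=\{d_1,\dots,d_n\}\subseteq\mathrm{GF}(2^m)$ (listed in a fixed order), $\mathcal{C}_D=\{(\mathrm{Tr}(xd_1),\dots,\mathrm{Tr}(xd_n)) : x\in\mathrm{GF}(2^m)\}$, a binary linear code of length $n$. The support of $f$ is $D_f=\{x:f(x)=1\}$. The Walsh transform of $f$ is $\hat f(w)=\sum_{x\in\mathrm{GF}(2^m)}(-1)^{f(x)+\mathrm{Tr}(wx)}$; $f$ is bent if $|\hat f(w)|=2^{m/2}$ for all $w\in\mathrm{GF}(2^m)$. *)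

theory Defs
  imports Complex_Main
begin

text \<open>GF(2^m) is modelled by a finite field type 'a with CARD('a) = 2^m.
  The absolute trace onto GF(2) = {0,1} (a subfield of 'a):\<close>
definition tr :: "nat \<Rightarrow> 'a::field \<Rightarrow> 'a" where
  "tr m x = (\<Sum>i<m. x ^ (2 ^ i))"

text \<open>Boolean functions GF(2^m) -> GF(2) are modelled as 'a => bool (True = 1).\<close>
definition support :: "('a \<Rightarrow> bool) \<Rightarrow> 'a set" where
  "support f = {x. f x}"

definition walsh :: "nat \<Rightarrow> ('a::{finite,field} \<Rightarrow> bool) \<Rightarrow> 'a \<Rightarrow> int" where
  "walsh m f w = (\<Sum>x\<in>UNIV. (-1) ^ (of_bool (f x) + (if tr m (w * x) = 0 then 0 else 1)))"

definition is_bent :: "nat \<Rightarrow> ('a::{finite,field} \<Rightarrow> bool) \<Rightarrow> bool" where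
  "is_bent m f \<longleftrightarrow> (\<forall>w. real_of_int \<bar>walsh m f w\<bar> = 2 powr (real m / 2))"

text \<open>The code C_D; a codeword is indexed by the elements of D (the coordinates),
  i.e. the word (Tr(x d))_{d in D}; entries outside D are set to 0.\<close>
definition codeword :: "nat \<Rightarrow> 'a::field set \<Rightarrow> 'a \<Rightarrow> ('a \<Rightarrow> 'a)" where
  "codeword m D x = (\<lambda>d. if d \<in> D then tr m (x * d) else 0)"

definition code :: "nat \<Rightarrow> 'a::field set \<Rightarrow> ('a \<Rightarrow> 'a) set" where
  "code m D = range (codeword m D)"

definition hweight :: "'a::zero set \<Rightarrow> ('a \<Rightarrow> 'a) \<Rightarrow> nat" where
  "hweight D c = card {d\<in>D. c d \<noteq> 0}"

definition weight_mult :: "nat \<Rightarrow> 'a::field set \<Rightarrow> nat \<Rightarrow> nat" where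
  "weight_mult m D w = card {c \<in> code m D. c \<noteq> (\<lambda>_. 0) \<and> hweight D c = w}"

definition nonzero_weights :: "nat \<Rightarrow> 'a::field set \<Rightarrow> nat set" where
  "nonzero_weights m D = {hweight D c | c. c \<in> code m D \<and> c \<noteq> (\<lambda>_. 0)}"

definition min_distance :: "nat \<Rightarrow> 'a::field set \<Rightarrow> nat" where
  "min_distance m D = Min (nonzero_weights m D)"

end

theory Submission imports Defs "HOL-Number_Theory.Number_Theory" "HOL-Computational_Algebra.Polynomial" begin

lemma ff_char2:
  assumes "card (UNIV::'a::{finite,field} set) = 2 ^ m"
  shows "(1::'a) + 1 = 0"
proof -
  have pos: "CHAR('a) > 0" by (rule finite_imp_CHAR_pos) simp
  hence pr: "prime CHAR('a)" by (rule prime_CHAR_semidom)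
  have "CHAR('a) dvd 2 ^ m" using CHAR_dvd_CARD[where 'a='a] assms by simp
  hence "CHAR('a) dvd 2" using pr prime_dvd_power by blast
  hence "CHAR('a) = 2" using pr by (metis prime_nat_iff prime_prime_factor_sqrt two_is_prime_nat primes_dvd_imp_eq)
  hence "(of_nat 2 :: 'a) = 0" by (metis of_nat_CHAR)
  thus ?thesis by simp
qed

lemma ff_fermat:
  fixes x :: "'a::{finite,field}"
  shows "x ^ card (UNIV::'a set) = x"
proof (cases "x = 0")
  case True
  have "card (UNIV::'a set) > 0" by (simp add: card_gt_0_iff)
  thus ?thesis using True by (simp add: zero_power)
next
  case False
  define N where "N = (UNIV - {0::'a})"
  have fin: "finite N" by simp
  have inj: "inj_on ((*) x) N" using False by (auto simp: inj_on_def)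
  have "(*) x ` N = N"
  proof
    show "(*) x ` N \<subseteq> N" using False by (auto simp: N_def)
    show "N \<subseteq> (*) x ` N"
    proof
      fix y assume "y \<in> N"
      hence "inverse x * y \<in> N" "y = x * (inverse x * y)" using False by (auto simp: N_def)
      thus "y \<in> (*) x ` N" by blast
    qed
  qed
  hence bij: "bij_betw ((*) x) N N" using inj by (simp add: bij_betw_def)
  have "prod ((*) x) N = prod id N"
    using prod.reindex_bij_betw[OF bij, of id] by simp
  moreover have "prod ((*) x) N = x ^ card N * prod id N"
    by (simp add: prod.distrib)
  moreover have "prod id N \<noteq> 0" using fin by (simp add: N_def)
  ultimately have "x ^ card N = 1" by simp
  moreover have "card N = card (UNIV::'a set) - 1" unfolding N_def by (simp add: card_Diff_singleton)
  moreover have "card (UNIV::'a set) = Suc (card (UNIV::'a set) - 1)" using card_gt_0_iff[of "UNIV::'a set"] by simp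
  ultimately show ?thesis by (metis power_Suc2 mult_1_left mult.commute)
qed

definition chi :: "nat \<Rightarrow> 'a::field \<Rightarrow> int" where
  "chi m y = (if tr m y = 0 then 1 else -1)"

lemma walsh_chi: "walsh m f w = (\<Sum>x\<in>UNIV. (if f x then -1 else 1) * chi m (w * x))"
  unfolding walsh_def chi_def by (rule sum.cong) auto

context
  fixes m :: nat
  assumes cardA: "card (UNIV::'a::{finite,field} set) = 2 ^ m"
begin

lemma c2: "(1::'a) + 1 = 0" using ff_char2[OF cardA] .

lemma add_self: "(x::'a) + x = 0"
proof -
  have "x + x = (1 + 1) * x" by (simp add: algebra_simps)
  thus ?thesis using c2 by simp
qed

lemma neg_self: "- (x::'a) = x"
  using add_self[of x] by (simp add: add_eq_0_iff)

lemma frob: "((x::'a) + y) ^ 2 = x ^ 2 + y ^ 2"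
proof -
  have "(x + y) ^ 2 = x^2 + y^2 + (x*y + x*y)" by (simp add: power2_eq_square algebra_simps)
  thus ?thesis using add_self[of "x*y"] by simp
qed

lemma frob_pow: "((x::'a) + y) ^ (2 ^ i) = x ^ (2 ^ i) + y ^ (2 ^ i)"
proof (induction i)
  case 0 then show ?case by simp
next
  case (Suc i)
  have "(x + y) ^ (2 ^ Suc i) = ((x + y) ^ (2 ^ i)) ^ 2" by (simp add: power_mult[symmetric] mult.commute)
  also have "\<dots> = (x ^ (2 ^ i)) ^ 2 + (y ^ (2 ^ i)) ^ 2" using Suc frob by simp
  also have "\<dots> = x ^ (2 ^ Suc i) + y ^ (2 ^ Suc i)" by (simp add: power_mult[symmetric] mult.commute)
  finally show ?case .
qed

lemma tr_add: "tr m ((x::'a) + y) = tr m x + tr m y"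
  unfolding tr_def by (simp add: frob_pow sum.distrib)

lemma tr_zero: "tr m (0::'a) = 0"
  unfolding tr_def by (simp add: zero_power)

lemma sum_sq: "finite A \<Longrightarrow> (sum (g :: _ \<Rightarrow> 'a) A) ^ 2 = sum (\<lambda>i. (g i) ^ 2) A"
  by (induction A rule: finite_induct) (simp_all add: frob)

lemma tr_sq: "tr m (x::'a) ^ 2 = tr m x"
proof -
  have "tr m x ^ 2 = (\<Sum>i<m. x ^ (2 ^ Suc i))"
    unfolding tr_def by (simp add: sum_sq power_mult[symmetric] mult.commute)
  moreover have "(\<Sum>i<Suc m. x ^ (2 ^ i)) = x ^ (2 ^ 0) + (\<Sum>i<m. x ^ (2 ^ Suc i))"
    by (rule sum.lessThan_Suc_shift)
  moreover have "(\<Sum>i<Suc m. x ^ (2 ^ i)) = tr m x + x ^ (2 ^ m)"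
    unfolding tr_def by simp
  moreover have "x ^ (2 ^ m) = x" using ff_fermat[of x] cardA by simp
  ultimately show ?thesis by simp
qed

lemma tr01: "tr m (x::'a) = 0 \<or> tr m x = 1"
proof -
  have "tr m x * (tr m x - 1) = 0" using tr_sq[of x] by (simp add: power2_eq_square algebra_simps)
  thus ?thesis by simp
qed

lemma tr_nonzero:
  assumes "m \<ge> 1"
  shows "\<exists>a::'a. tr m a \<noteq> 0"
proof (rule ccontr)
  assume H: "\<not> (\<exists>a::'a. tr m a \<noteq> 0)"
  define p :: "'a poly" where "p = (\<Sum>i<m. monom 1 (2 ^ i))"
  have ev: "poly p x = tr m x" for x unfolding p_def tr_def by (simp add: poly_sum poly_monom)
  have "coeff p (2 ^ (m - 1)) = (\<Sum>i<m. if 2 ^ (m - 1) = (2::nat) ^ i then 1 else 0)"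
    unfolding p_def by (simp add: coeff_sum coeff_monom)
  also have "\<dots> = (\<Sum>i\<in>{m - 1}. 1)"
  proof (rule sum.mono_neutral_cong_right)
    show "{m - 1} \<subseteq> {..<m}" using assms by auto
  qed auto
  finally have "coeff p (2 ^ (m - 1)) = 1" by simp
  hence pnz: "p \<noteq> 0" by auto
  have "degree p \<le> 2 ^ (m - 1)"
    unfolding p_def
  proof (rule degree_sum_le)
    fix i assume "i \<in> {..<m}"
    hence "(2::nat) ^ i \<le> 2 ^ (m - 1)" by (intro power_increasing) auto
    thus "degree (monom (1::'a) (2 ^ i)) \<le> 2 ^ (m - 1)" by (simp add: degree_monom_eq)
  qed simp
  moreover have "card {x. poly p x = 0} \<le> degree p" using pnz by (rule card_poly_roots_bound)
  moreover have "{x. poly p x = 0} = UNIV" using H ev by auto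
  moreover have "(2::nat) ^ (m - 1) < 2 ^ m" using assms by (intro power_strict_increasing) auto
  ultimately show False using cardA by (metis card_UNIV_unit le_trans not_le)
qed


lemma chi_add: "chi m ((x::'a) + y) = chi m x * chi m y"
  using tr01[of x] tr01[of y] c2 by (auto simp: chi_def tr_add)

lemma chi_sum0:
  assumes "m \<ge> 1"
  shows "(\<Sum>y\<in>(UNIV::'a set). chi m y) = 0"
proof -
  obtain a :: 'a where a: "tr m a \<noteq> 0" using tr_nonzero[OF assms] by blast
  have bij: "bij_betw (\<lambda>y. y + a) UNIV (UNIV::'a set)"
    by (rule bij_betwI[where g="\<lambda>y. y - a"]) auto
  have "(\<Sum>y\<in>(UNIV::'a set). chi m y) = (\<Sum>y\<in>UNIV. chi m (y + a))"
    using sum.reindex_bij_betw[OF bij, of "chi m"] by simp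
  also have "\<dots> = (\<Sum>y\<in>(UNIV::'a set). - chi m y)"
  proof -
    have "chi m a = -1" using a by (simp add: chi_def)
    thus ?thesis by (simp add: chi_add)
  qed
  finally show ?thesis by (simp add: sum_negf)
qed

lemma chi_sum_mult:
  assumes "m \<ge> 1" "(x::'a) \<noteq> 0"
  shows "(\<Sum>y\<in>UNIV. chi m (x * y)) = 0"
proof -
  have bij: "bij_betw (\<lambda>y. x * y) UNIV (UNIV::'a set)"
    by (rule bij_betwI[where g="\<lambda>y. inverse x * y"]) (use assms(2) in auto)
  show ?thesis using sum.reindex_bij_betw[OF bij, of "chi m"] chi_sum0[OF assms(1)] by simp
qed


lemma walsh_weight:
  "walsh m f (x::'a) = (\<Sum>y\<in>UNIV. chi m (x * y)) - 2 * int (card (support f))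
      + 4 * int (card {d \<in> support f. tr m (x * d) \<noteq> 0})"
proof -
  let ?D = "support f"
  have "walsh m f x = (\<Sum>y\<in>UNIV. chi m (x * y) - 2 * (if y \<in> ?D then chi m (x * y) else 0))"
    unfolding walsh_chi by (rule sum.cong) (auto simp: support_def)
  also have "\<dots> = (\<Sum>y\<in>UNIV. chi m (x * y)) - 2 * (\<Sum>y\<in>?D. chi m (x * y))"
    by (simp add: sum_subtractf sum_distrib_left[symmetric] sum.inter_filter[symmetric])
  also have "(\<Sum>y\<in>?D. chi m (x * y)) = (\<Sum>y\<in>?D. 1 - 2 * (if tr m (x * y) \<noteq> 0 then 1 else 0))"
    by (rule sum.cong) (auto simp: chi_def)
  also have "\<dots> = int (card ?D) - 2 * int (card {d \<in> ?D. tr m (x * d) \<noteq> 0})"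
    by (simp add: sum_subtractf sum_distrib_left[symmetric] sum.inter_filter[symmetric])
  finally show ?thesis by simp
qed

lemma walsh_total:
  assumes "m \<ge> 1" "\<not> f 0"
  shows "(\<Sum>x\<in>(UNIV::'a set). walsh m f x) = 2 ^ m"
proof -
  have inner: "(\<Sum>x\<in>(UNIV::'a set). chi m (x * y)) = (if y = 0 then 2 ^ m else 0)" for y :: 'a
  proof (cases "y = 0")
    case True then show ?thesis using cardA by (simp add: chi_def tr_zero)
  next
    case False then show ?thesis using chi_sum_mult[OF assms(1) False] by (simp add: mult.commute)
  qed
  have "(\<Sum>x\<in>(UNIV::'a set). walsh m f x)
      = (\<Sum>x\<in>UNIV. \<Sum>y\<in>UNIV. (if f y then -1 else 1) * chi m (x * y))"
    by (simp add: walsh_chi)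
  also have "\<dots> = (\<Sum>y\<in>UNIV. (if f y then -1 else 1) * (\<Sum>x\<in>(UNIV::'a set). chi m (x * y)))"
    by (subst sum.swap) (simp add: sum_distrib_left)
  also have "\<dots> = (\<Sum>y\<in>(UNIV::'a set). if y = 0 then 2 ^ m else 0)"
    by (rule sum.cong) (auto simp: inner assms(2))
  finally show ?thesis by simp
qed

end


theorem mainTheorem7:
  fixes f :: "'a::{finite,field} \<Rightarrow> bool" and m :: nat
  assumes card: "card (UNIV :: 'a set) = 2 ^ m"
    and m4: "m \<ge> 4" and meven: "even m"
    and bent: "is_bent m f" and f0: "\<not> f 0"
  defines "nf \<equiv> card (support f)"
  shows "(real nf = 2 ^ (m - 1) + 2 ^ ((m - 2) div 2) \<or> real nf = 2 ^ (m - 1) - 2 ^ ((m - 2) div 2))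
    \<and> card (code m (support f)) = 2 ^ m
    \<and> real (min_distance m (support f)) = (real nf - 2 ^ ((m - 2) div 2)) / 2
    \<and> (\<exists>w1 w2. w1 \<noteq> w2 \<and> nonzero_weights m (support f) = {w1, w2}
        \<and> real w1 = real nf / 2 - 2 ^ ((m - 4) div 2)
        \<and> real w2 = real nf / 2 + 2 ^ ((m - 4) div 2)
        \<and> real (weight_mult m (support f) w1) = (2 ^ m - 1 - real nf / 2 ^ ((m - 2) div 2)) / 2
        \<and> real (weight_mult m (support f) w2) = (2 ^ m - 1 + real nf / 2 ^ ((m - 2) div 2)) / 2)"
proof -
  define D where "D = support f"
  have m1: "m \<ge> 1" using m4 by simp
  obtain h where mh: "m = 2 * h" using meven by blast
  have h2: "h \<ge> 2" using m4 mh by simp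
  define q :: int where "q = 2 ^ h"
  have qq: "q * q = 2 ^ m" unfolding q_def mh by (simp add: power_mult[symmetric] power2_eq_square[symmetric] mult.commute)
  have q4: "q \<ge> 4"
  proof -
    have "(2::int) ^ 2 \<le> 2 ^ h" using h2 by (intro power_increasing) auto
    thus ?thesis by (simp add: q_def)
  qed
  have wv: "walsh m f w = q \<or> walsh m f w = - q" for w
  proof -
    have "real_of_int \<bar>walsh m f w\<bar> = 2 powr (real m / 2)" using bent unfolding is_bent_def by blast
    also have "real m / 2 = real h" using mh by simp
    also have "2 powr real h = real_of_int q" unfolding q_def by (simp add: powr_realpow)
    finally have "\<bar>walsh m f w\<bar> = q" by linarith
    thus ?thesis by auto
  qed
  define wt where "wt x = card {d \<in> D. tr m (x * d) \<noteq> 0}" for x :: 'a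
  have key: "walsh m f x = - 2 * int nf + 4 * int (wt x)" if "x \<noteq> 0" for x
    using walsh_weight[OF card, of f x] chi_sum_mult[OF card m1 that] unfolding wt_def D_def nf_def by simp
  have W0: "walsh m f 0 = 2 ^ m - 2 * int nf"
  proof -
    have "wt 0 = 0" unfolding wt_def by (simp add: tr_zero[OF card])
    moreover have "(\<Sum>y\<in>(UNIV::'a set). chi m (0 * y)) = 2 ^ m" using card by (simp add: chi_def tr_zero[OF card])
    ultimately show ?thesis using walsh_weight[OF card, of f 0] unfolding wt_def D_def nf_def by simp
  qed
  obtain \<epsilon> :: int where eps: "\<epsilon> = 1 \<or> \<epsilon> = -1" and W0e: "walsh m f 0 = \<epsilon> * q"
    using wv[of 0] by (metis mult_1 mult_minus1)
  define A where "A = {x::'a. x \<noteq> 0 \<and> walsh m f x = q}"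
  define B where "B = {x::'a. x \<noteq> 0 \<and> walsh m f x = - q}"
  have qnz: "q \<noteq> 0" using q4 by simp
  have AB: "A \<inter> B = {}" using qnz by (auto simp: A_def B_def)
  have ABU: "A \<union> B = UNIV - {0}" using wv by (auto simp: A_def B_def)
  have cardAB: "int (card A) + int (card B) = q * q - 1"
  proof -
    have "card A + card B = card (UNIV - {0::'a})" using AB ABU by (metis card_Un_disjoint finite)
    also have "\<dots> = 2 ^ m - 1" using card by (simp add: card_Diff_singleton)
    finally have "card A + card B = 2 ^ m - 1" .
    moreover have "(2::nat) ^ m \<ge> 1" by simp
    ultimately have "int (card A + card B) = int (2 ^ m) - 1" by (simp add: of_nat_diff)
    thus ?thesis using qq by simp
  qed
  have sumW: "(\<Sum>x\<in>(UNIV::'a set). walsh m f x) = walsh m f 0 + q * int (card A) - q * int (card B)"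
  proof -
    have U: "(UNIV::'a set) = insert 0 (A \<union> B)" using ABU by auto
    have "(\<Sum>x\<in>(UNIV::'a set). walsh m f x) = walsh m f 0 + (\<Sum>x\<in>A \<union> B. walsh m f x)"
      by (subst U, subst sum.insert) (auto simp: A_def B_def)
    also have "(\<Sum>x\<in>A \<union> B. walsh m f x) = (\<Sum>x\<in>A. walsh m f x) + (\<Sum>x\<in>B. walsh m f x)"
      using AB by (simp add: sum.union_disjoint)
    also have "(\<Sum>x\<in>A. walsh m f x) = (\<Sum>x\<in>A. q)" by (rule sum.cong) (auto simp: A_def)
    also have "(\<Sum>x\<in>B. walsh m f x) = (\<Sum>x\<in>B. - q)" by (rule sum.cong) (auto simp: B_def)
    finally show ?thesis by (simp add: mult.commute)
  qed
  have nf2: "2 * int nf = q * q - \<epsilon> * q" using W0 W0e qq by simp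
  have "q * (int (card A) - int (card B)) = q * (q - \<epsilon>)"
    using sumW walsh_total[where m=m and f=f, OF card m1 f0] W0 W0e nf2 qq by (simp add: algebra_simps)
  hence diffAB: "int (card A) - int (card B) = q - \<epsilon>" using qnz by simp
  have qq4: "q * q \<ge> 4 * q" using q4 by (intro mult_right_mono) auto
  have "int (card B) > 0" using cardAB diffAB eps q4 qq4 by linarith
  hence Bpos: "card B > 0" by simp
  have "int (card A) > 0" using cardAB diffAB eps q4 qq4 by linarith
  hence Apos: "card A > 0" by simp
  obtain b where b: "b \<in> B" using Bpos by (metis card_gt_0_iff ex_in_conv)
  obtain a where a: "a \<in> A" using Apos by (metis card_gt_0_iff ex_in_conv)
  define w1 where "w1 = wt b"
  define w2 where "w2 = wt a"
  have w1e: "4 * int w1 = 2 * int nf - q" using key[of b] b unfolding B_def w1_def by simp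
  have w2e: "4 * int w2 = 2 * int nf + q" using key[of a] a unfolding A_def w2_def by simp
  have w12: "w1 < w2" using w1e w2e q4 by simp
  have wtB: "wt x = w1 \<longleftrightarrow> x \<in> B" if "x \<noteq> 0" for x
    using key[OF that] wv[of x] w1e qnz that unfolding B_def by auto
  have wtA: "wt x = w2 \<longleftrightarrow> x \<in> A" if "x \<noteq> 0" for x
    using key[OF that] wv[of x] w2e qnz that unfolding A_def by auto
  have wtpos: "wt x > 0" if "x \<noteq> 0" for x
  proof -
    have "x \<in> A \<or> x \<in> B" using ABU that by auto
    hence "wt x = w1 \<or> wt x = w2" using wtA wtB that by auto
    moreover have "4 * int w1 > 0" using w1e nf2 eps qq4 q4 by auto
    ultimately show ?thesis using w12 by auto
  qed
  let ?cw = "codeword m D"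
  have hw: "hweight D (?cw x) = wt x" for x
    unfolding hweight_def codeword_def wt_def by (rule arg_cong[where f=card]) auto
  have cw0: "?cw x = (\<lambda>_. 0) \<longleftrightarrow> x = 0" for x
  proof
    assume H: "?cw x = (\<lambda>_. 0)"
    show "x = 0"
    proof (rule ccontr)
      assume "x \<noteq> 0"
      hence "wt x > 0" by (rule wtpos)
      hence "{d \<in> D. tr m (x * d) \<noteq> 0} \<noteq> {}" unfolding wt_def by (metis card.empty less_irrefl)
      then obtain d where "d \<in> D" "tr m (x * d) \<noteq> 0" by blast
      hence "?cw x d \<noteq> 0" by (simp add: codeword_def)
      thus False using H by simp
    qed
  qed (auto simp: codeword_def tr_zero[OF card])
  have inj: "inj ?cw"
  proof (rule injI)
    fix x y assume H: "?cw x = ?cw y"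
    have "?cw (x - y) = (\<lambda>_. 0)"
    proof
      fix d
      show "?cw (x - y) d = 0"
      proof (cases "d \<in> D")
        case True
        have "tr m (x * d) = tr m ((x - y) * d) + tr m (y * d)"
          using tr_add[OF card, of "(x - y) * d" "y * d"] by (simp add: algebra_simps)
        moreover have "tr m (x * d) = tr m (y * d)" using fun_cong[OF H, of d] True by (simp add: codeword_def)
        ultimately show ?thesis using True by (simp add: codeword_def)
      qed (simp add: codeword_def)
    qed
    thus "x = y" using cw0 by simp
  qed
  have cardcode: "card (code m D) = 2 ^ m"
    unfolding code_def using inj card by (simp add: card_image)
  have nzw: "nonzero_weights m D = {w1, w2}"
  proof -
    have "nonzero_weights m D = {wt x | x. x \<noteq> 0}"
    proof
      show "nonzero_weights m D \<subseteq> {wt x | x. x \<noteq> 0}"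
        unfolding nonzero_weights_def code_def using cw0 hw by auto
      show "{wt x | x. x \<noteq> 0} \<subseteq> nonzero_weights m D"
      proof
        fix w assume "w \<in> {wt x | x. x \<noteq> 0}"
        then obtain x where x: "x \<noteq> 0" "w = wt x" by blast
        have "?cw x \<in> code m D" "?cw x \<noteq> (\<lambda>_. 0)" "w = hweight D (?cw x)"
          using x cw0 hw by (auto simp: code_def)
        thus "w \<in> nonzero_weights m D" unfolding nonzero_weights_def by blast
      qed
    qed
    also have "\<dots> = {w1, w2}"
    proof
      show "{wt x | x. x \<noteq> 0} \<subseteq> {w1, w2}"
      proof
        fix w assume "w \<in> {wt x | x. x \<noteq> 0}"
        then obtain x where x: "x \<noteq> 0" "w = wt x" by blast
        hence "x \<in> A \<or> x \<in> B" using ABU by auto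
        thus "w \<in> {w1, w2}" using wtA wtB x by auto
      qed
      have "a \<noteq> 0" "b \<noteq> 0" using a b by (auto simp: A_def B_def)
      thus "{w1, w2} \<subseteq> {wt x | x. x \<noteq> 0}" unfolding w1_def w2_def by blast
    qed
    finally show ?thesis .
  qed
  have wm: "weight_mult m D (wt x) = card {y. y \<noteq> 0 \<and> wt y = wt x}" for x
  proof -
    have "{c \<in> code m D. c \<noteq> (\<lambda>_. 0) \<and> hweight D c = wt x} = ?cw ` {y. y \<noteq> 0 \<and> wt y = wt x}"
    proof
      show "{c \<in> code m D. c \<noteq> (\<lambda>_. 0) \<and> hweight D c = wt x} \<subseteq> ?cw ` {y. y \<noteq> 0 \<and> wt y = wt x}"
        unfolding code_def using cw0 hw by auto
      show "?cw ` {y. y \<noteq> 0 \<and> wt y = wt x} \<subseteq> {c \<in> code m D. c \<noteq> (\<lambda>_. 0) \<and> hweight D c = wt x}"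
        unfolding code_def using cw0 hw by auto
    qed
    thus ?thesis unfolding weight_mult_def using inj by (simp add: card_image inj_on_subset)
  qed
  have wm1: "weight_mult m D w1 = card B"
  proof -
    have "{y. y \<noteq> 0 \<and> wt y = wt b} = B" using wtB unfolding w1_def by (auto simp: B_def)
    thus ?thesis using wm[of b] unfolding w1_def by simp
  qed
  have wm2: "weight_mult m D w2 = card A"
  proof -
    have "{y. y \<noteq> 0 \<and> wt y = wt a} = A" using wtA unfolding w2_def by (auto simp: A_def)
    thus ?thesis using wm[of a] unfolding w2_def by simp
  qed
  have md: "min_distance m D = w1"
    unfolding min_distance_def nzw using w12 by simp
  have hs: "h = Suc (Suc (h - 2))" "h - 1 = Suc (h - 2)" using h2 by arith+
  have e1: "(m - 2) div 2 = h - 1" "(m - 4) div 2 = h - 2"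
  proof -
    have "m - 2 = 2 * (h - 1)" "m - 4 = 2 * (h - 2)" using mh h2 by arith+
    thus "(m - 2) div 2 = h - 1" "(m - 4) div 2 = h - 2" by simp_all
  qed
  have p4: "(2::real) ^ h = 4 * 2 ^ (h - 2)"
    by (subst hs(1)) simp
  have p2: "(2::real) ^ (h - 1) = 2 * 2 ^ (h - 2)"
    by (subst hs(2)) simp
  have Qr: "real_of_int q = 2 * 2 ^ (h - 1)" "real_of_int q = 4 * 2 ^ (h - 2)"
    using p4 p2 by (simp_all add: q_def)
  have Mr: "(2::real) ^ m = real_of_int q * real_of_int q" "(2::real) ^ m = 2 * 2 ^ (m - 1)"
  proof -
    have "real_of_int (q * q) = real_of_int (2 ^ m)" using qq by simp
    thus "(2::real) ^ m = real_of_int q * real_of_int q" by simp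
    have ms: "m = Suc (m - 1)" using m1 by simp
    show "(2::real) ^ m = 2 * 2 ^ (m - 1)" by (subst ms) simp
  qed
  let ?Q = "real_of_int q"
  have nfr: "2 * real nf = ?Q * ?Q - real_of_int \<epsilon> * ?Q" using arg_cong[OF nf2, of real_of_int] by simp
  have w1r: "4 * real w1 = 2 * real nf - ?Q" using arg_cong[OF w1e, of real_of_int] by simp
  have w2r: "4 * real w2 = 2 * real nf + ?Q" using arg_cong[OF w2e, of real_of_int] by simp
  have Ar: "real (card A) + real (card B) = ?Q * ?Q - 1" using arg_cong[OF cardAB, of real_of_int] by simp
  have Dr: "real (card A) - real (card B) = ?Q - real_of_int \<epsilon>" using arg_cong[OF diffAB, of real_of_int] by simp
  have Qpos: "?Q > 0" using q4 by simp
  have ratio: "real nf / 2 ^ (h - 1) = ?Q - real_of_int \<epsilon>"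
  proof -
    have "real nf / 2 ^ (h - 1) = (2 * real nf) / ?Q" using Qr(1) by simp
    also have "\<dots> = ?Q - real_of_int \<epsilon>" using nfr Qpos by (simp add: field_simps)
    finally show ?thesis .
  qed
  have part1: "real nf = 2 ^ (m - 1) + 2 ^ (h - 1) \<or> real nf = 2 ^ (m - 1) - 2 ^ (h - 1)"
    using eps
  proof
    assume "\<epsilon> = 1"
    hence "2 * real nf = ?Q * ?Q - ?Q" using nfr by simp
    thus ?thesis using Mr Qr by linarith
  next
    assume "\<epsilon> = -1"
    hence "2 * real nf = ?Q * ?Q + ?Q" using nfr by simp
    thus ?thesis using Mr Qr by linarith
  qed
  have part3: "real (min_distance m D) = (real nf - 2 ^ (h - 1)) / 2"
    using md w1r Qr by simp
  have r1: "real w1 = real nf / 2 - 2 ^ (h - 2)" using w1r Qr by linarith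
  have r2: "real w2 = real nf / 2 + 2 ^ (h - 2)" using w2r Qr by linarith
  have r3: "real (weight_mult m D w1) = (2 ^ m - 1 - (?Q - real_of_int \<epsilon>)) / 2"
    using wm1 Ar Dr Mr by simp
  have r4: "real (weight_mult m D w2) = (2 ^ m - 1 + (?Q - real_of_int \<epsilon>)) / 2"
    using wm2 Ar Dr Mr by simp
  have w12': "w1 \<noteq> w2" using w12 by simp
  show ?thesis
    unfolding D_def[symmetric] e1 ratio
    using part1 cardcode part3 w12' nzw r1 r2 r3 r4 by blast
qed

end
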